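(* Let $q$ be a prime power and $b,k,r$ positive integers. Let $\boldsymbol{x}=(x^{(1)},x^{(2)})\in\mathbb{F}_q^{k+r}$ and $\boldsymbol{y}=(y^{(1)},y^{(2)})\in\mathbb{F}_q^{k+r}$ with $x^{(1)},y^{(1)}\in\mathbb{F}_q^k$ and $x^{(2)},y^{(2)}\in\mathbb{F}_q^r$. Then \[ d_b(x^{(1)},y^{(1)})+d_b(x^{(2)},y^{(2)})-(b-1)\le d_b(\boldsymbol{x},\boldsymbol{y})\le d_b(x^{(1)},y^{(1)})+d_b(x^{(2)},y^{(2)})+(b-1). \]
   Context: For $\boldsymbol{z}=(z_0,\ldots,z_{n-1})\in\mathbb{F}_q^n$, the $b$-symbol read vector is $\pi_b(\boldsymbol{z})=[(z_0,\ldots,z_{b-1}),(z_1,\ldots,z_b),\ldots,(z_{n-1},z_0,\ldots,z_{b-2})]$ with indices taken modulo $n$, and the $b$-symbol distance is $d_b(\boldsymbol{z},\boldsymbol{w})=d_H(\pi_b(\boldsymbol{z}),\pi_b(\boldsymbol{w}))$, the Hamming distance between the read vectors viewed as words over $\mathbb{F}_q^b$. The paper's standing assumption is $2<b<k$. *)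

theory Defs
  imports Main
begin

definition b_read :: "nat \<Rightarrow> 'a list \<Rightarrow> 'a list list" where
  "b_read b z = map (\<lambda>i. map (\<lambda>j. z ! ((i + j) mod length z)) [0..<b]) [0..<length z]"

definition hamming :: "'a list \<Rightarrow> 'a list \<Rightarrow> nat" where
  "hamming u v = card {i. i < length u \<and> u ! i \<noteq> v ! i}"

definition b_dist :: "nat \<Rightarrow> 'a list \<Rightarrow> 'a list \<Rightarrow> nat" where
  "b_dist b z w = hamming (b_read b z) (b_read b w)"

end

theory Submission
  imports Defs
begin

definition Pc :: "nat \<Rightarrow> nat \<Rightarrow> (nat\<Rightarrow>bool) \<Rightarrow> (nat\<Rightarrow>bool) \<Rightarrow> nat \<Rightarrow> nat \<Rightarrow> bool" where
  "Pc k r D1 D2 b i = (\<exists>t<b. (if (i+t) mod (k+r) < k then D1 ((i+t) mod (k+r)) else D2 ((i+t) mod (k+r) - k)))"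

definition P1 :: "(nat\<Rightarrow>bool) \<Rightarrow> nat \<Rightarrow> nat \<Rightarrow> nat \<Rightarrow> bool" where
  "P1 D k b i = (\<exists>t<b. D ((i+t) mod k))"

lemma int1:
  assumes "i + b \<le> k" shows "Pc k r D1 D2 b i = P1 D1 k b i"
proof -
  have "\<And>t. t < b \<Longrightarrow> (i+t) mod (k+r) = i+t \<and> (i+t) mod k = i+t \<and> i + t < k" using assms by auto
  then show ?thesis unfolding Pc_def P1_def by (metis (no_types, lifting))
qed

lemma rot:
  assumes "k \<le> i" "i < k + r"
  shows "Pc k r D1 D2 b i = Pc r k D2 D1 b (i - k)"
proof -
  have "\<And>t. (if (i+t) mod (k+r) < k then D1 ((i+t) mod (k+r)) else D2 ((i+t) mod (k+r) - k))
     = (if (i-k+t) mod (r+k) < r then D2 ((i-k+t) mod (r+k)) else D1 ((i-k+t) mod (r+k) - r))"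
  proof -
    fix t
    define p where "p = (i-k+t) mod (r+k)"
    have pl: "p < r + k" using assms unfolding p_def by auto
    have "(i+t) mod (k+r) = (p + k) mod (k+r)" unfolding p_def using assms
      by (metis (no_types, lifting) add.commute le_add_diff_inverse2 mod_add_left_eq add.assoc add_diff_assoc2)
    moreover have "p < r \<Longrightarrow> (p+k) mod (k+r) = p + k" by simp
    moreover have "\<not> p < r \<Longrightarrow> (p+k) mod (k+r) = p - r"
      using pl by (simp add: mod_if)
    ultimately show "?thesis t" unfolding p_def[symmetric] using pl by auto
  qed
  then show ?thesis unfolding Pc_def by simp
qed

lemma int2:
  assumes "k \<le> i" "i + b \<le> k + r" shows "Pc k r D1 D2 b i = P1 D2 r b (i - k)"
proof (cases "b = 0")
  case True
  then show ?thesis unfolding Pc_def P1_def by simp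
next
  case False
  then have "i < k + r" using assms by linarith
  then have "Pc k r D1 D2 b i = Pc r k D2 D1 b (i - k)" using rot[of k i r] assms by blast
  also have "\<dots> = P1 D2 r b (i - k)" by (rule int1) (use assms in auto)
  finally show ?thesis .
qed

lemma subA:
  assumes "\<not> P1 D1 k b i" "i < k" "p < k" "i \<le> p \<or> p + k < i + b" "k < i + b"
  shows "\<not> D1 p"
proof
  assume d: "D1 p"
  show False
  proof (cases "i \<le> p")
    case True
    then have "p - i < b" using assms by auto
    moreover have "(i + (p - i)) mod k = p" using True assms(3) by simp
    ultimately show False using assms(1) d unfolding P1_def by metis
  next
    case False
    then have "k - i + p < b" using assms(2,3,4) by auto
    moreover have "(i + (k - i + p)) mod k = p" using assms(2,3) by simp
    ultimately show False using assms(1) d unfolding P1_def by metis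
  qed
qed

lemma subB:
  assumes "Pc k r D1 D2 b i" "i < k" "0 < r"
    and h: "\<forall>p<k. (i \<le> p \<or> p + k < i + b) \<longrightarrow> \<not> D1 p"
  shows "\<exists>q<r. q + k < i + b \<and> D2 q"
proof -
  obtain t where t: "t < b" and
    d: "if (i+t) mod (k+r) < k then D1 ((i+t) mod (k+r)) else D2 ((i+t) mod (k+r) - k)"
    using assms(1) unfolding Pc_def by blast
  define p where "p = (i+t) mod (k+r)"
  have pl: "p < k + r" unfolding p_def using assms(3) by simp
  show ?thesis
  proof (cases "i + t < k + r")
    case True
    then have pe: "p = i + t" unfolding p_def by simp
    show ?thesis
    proof (cases "i + t < k")
      case True
      then show ?thesis using d h pe p_def by auto
    next
      case False
      then show ?thesis using d pe p_def t True
        by (intro exI[of _ "i + t - k"]) auto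
    qed
  next
    case False
    have "p = (i + t - (k+r)) mod (k+r)" unfolding p_def using False
      by (simp add: le_mod_geq)
    then have "p \<le> i + t - (k + r)" by simp
    then have pb: "p + k < i + b" using False t assms(3) by linarith
    show ?thesis
    proof (cases "p < k")
      case True
      then show ?thesis using d h pb p_def by auto
    next
      case False
      then show ?thesis using d pb p_def pl
        by (intro exI[of _ "p - k"]) auto
    qed
  qed
qed

lemma subC1:
  assumes "\<not> Pc k r D1 D2 b i" "i < k" "k < i + b" "p < k" "i \<le> p"
  shows "\<not> D1 p"
proof
  assume "D1 p"
  moreover have "p - i < b" using assms by auto
  moreover have "(i + (p - i)) mod (k+r) = p" using assms by simp
  ultimately show False using assms(1,4) unfolding Pc_def by metis
qed

lemma subC2:
  assumes "\<not> Pc k r D1 D2 b i" "i < k" "q < r" "q + k < i + b"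
  shows "\<not> D2 q"
proof
  assume "D2 q"
  moreover have "k - i + q < b" using assms by auto
  moreover have "(i + (k - i + q)) mod (k+r) = k + q" using assms by simp
  ultimately show False using assms(1) unfolding Pc_def
    by (metis add_diff_cancel_left' less_add_eq_less not_add_less1)
qed

lemma subD:
  assumes "P1 D1 k b i" "i < k" "\<forall>p<k. i \<le> p \<longrightarrow> \<not> D1 p"
  shows "\<exists>p<k. p + k < i + b \<and> D1 p"
proof -
  obtain t where t: "t < b" "D1 ((i+t) mod k)" using assms(1) unfolding P1_def by blast
  show ?thesis
  proof (cases "i + t < k")
    case True
    then show ?thesis using t assms(3) by auto
  next
    case False
    have "(i+t) mod k = (i + t - k) mod k" using False by (simp add: le_mod_geq)
    then have "(i+t) mod k \<le> i + t - k" by simp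
    then show ?thesis using t False assms(2)
      by (intro exI[of _ "(i+t) mod k"]) auto
  qed
qed

lemma upper_contra:
  assumes "0 < k" "0 < r" "i < k" "k < i + b" "Pc k r D1 D2 b i" "\<not> P1 D1 k b i"
    "k \<le> i'" "i' < k + r" "k + r < i' + b" "Pc k r D1 D2 b i'" "\<not> P1 D2 r b (i' - k)"
  shows False
proof -
  define j where "j = i' - k"
  have j: "j < r" "r < j + b" "Pc r k D2 D1 b j" "\<not> P1 D2 r b j"
    using assms rot[of k i' r D1 D2 b] unfolding j_def by auto
  have hA: "\<forall>p<k. (i \<le> p \<or> p + k < i + b) \<longrightarrow> \<not> D1 p"
    using subA[OF assms(6) assms(3) _ _ assms(4)] by blast
  obtain q where q: "q < r" "q + k < i + b" "D2 q" using subB[OF assms(5) assms(3) assms(2) hA] by blast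
  have hB: "\<forall>p<r. (j \<le> p \<or> p + r < j + b) \<longrightarrow> \<not> D2 p"
    using subA[OF j(4) j(1) _ _ j(2)] by blast
  obtain q' where q': "q' < k" "q' + r < j + b" "D1 q'" using subB[OF j(3) j(1) assms(1) hB] by blast
  have "q' + k \<ge> i + b" using hA q' by auto
  moreover have "q + r \<ge> j + b" using hB q by auto
  ultimately show False using q q' by linarith
qed

lemma lower_contra:
  assumes "0 < k" "0 < r" "i < k" "k < i + b" "\<not> Pc k r D1 D2 b i" "P1 D1 k b i"
    "k \<le> i'" "i' < k + r" "k + r < i' + b" "\<not> Pc k r D1 D2 b i'" "P1 D2 r b (i' - k)"
  shows False
proof -
  define j where "j = i' - k"
  have j: "j < r" "r < j + b" "\<not> Pc r k D2 D1 b j" "P1 D2 r b j"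
    using assms rot[of k i' r D1 D2 b] unfolding j_def by auto
  obtain p where p: "p < k" "p + k < i + b" "D1 p"
    using subD[OF assms(6) assms(3)] subC1[OF assms(5) assms(3) assms(4)] by blast
  obtain q where q: "q < r" "q + r < j + b" "D2 q"
    using subD[OF j(4) j(1)] subC1[OF j(3) j(1) j(2)] by blast
  have "\<not> (q + k < i + b)" using subC2[OF assms(5) assms(3)] q by blast
  moreover have "\<not> (p + r < j + b)" using subC2[OF j(3) j(1)] p by blast
  ultimately show False using p q by linarith
qed

lemma card_edge: "card {i::nat. i < m \<and> m < i + b} \<le> b - 1"
proof -
  have "{i::nat. i < m \<and> m < i + b} \<subseteq> {m - (b - 1)..<m}" by auto
  then have "card {i::nat. i < m \<and> m < i + b} \<le> card {m - (b - 1)..<m}"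
    by (intro card_mono) auto
  then show ?thesis by simp
qed

lemma main_card:
  fixes D1 D2 :: "nat \<Rightarrow> bool" and b k r :: nat
  assumes "0 < k" "0 < r"
  defines "A \<equiv> {i. i < k + r \<and> Pc k r D1 D2 b i}"
    and "A1 \<equiv> {i. i < k \<and> P1 D1 k b i}"
    and "A2 \<equiv> {j. j < r \<and> P1 D2 r b j}"
  shows "card A \<le> card A1 + card A2 + (b - 1) \<and> card A1 + card A2 + 0 \<le> card A + (b - 1)"
proof -
  define A2s where "A2s = (\<lambda>j. j + k) ` A2"
  have fin: "finite A" "finite A1" "finite A2" "finite A2s"
    unfolding A_def A1_def A2_def A2s_def by auto
  have cA2s: "card A2s = card A2" unfolding A2s_def by (intro card_image) (auto simp: inj_on_def)
  have disj: "A1 \<inter> A2s = {}" unfolding A1_def A2s_def by auto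
  have cU: "card (A1 \<union> A2s) = card A1 + card A2" using card_Un_disjoint[OF fin(2) fin(4) disj] cA2s by simp
  have memA2s: "i \<in> A2s" if "k \<le> i" "i < k + r" "P1 D2 r b (i - k)" for i
  proof -
    have "i - k \<in> A2" using that unfolding A2_def by auto
    moreover have "i = (i - k) + k" using that by simp
    ultimately show ?thesis unfolding A2s_def by blast
  qed
  define E1 where "E1 = {i::nat. i < k \<and> k < i + b}"
  define E2 where "E2 = {i::nat. i < k + r \<and> k + r < i + b}"
  have cE1: "card E1 \<le> b - 1" unfolding E1_def by (rule card_edge)
  have cE2: "card E2 \<le> b - 1" unfolding E2_def by (rule card_edge)
  have finE: "finite E1" "finite E2" unfolding E1_def E2_def by auto
  define R where "R = A - (A1 \<union> A2s)"
  have R1: "i \<in> E1 \<and> \<not> P1 D1 k b i \<and> Pc k r D1 D2 b i" if "i \<in> R" "i < k" for i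
  proof -
    have "Pc k r D1 D2 b i" "\<not> P1 D1 k b i" using that unfolding R_def A_def A1_def by auto
    moreover have "k < i + b" using calculation int1[of i b k r D1 D2] by (cases "i + b \<le> k") auto
    ultimately show ?thesis using that unfolding E1_def by auto
  qed
  have R2: "i \<in> E2 \<and> \<not> P1 D2 r b (i - k) \<and> Pc k r D1 D2 b i \<and> k \<le> i" if "i \<in> R" "\<not> i < k" for i
  proof -
    have "Pc k r D1 D2 b i" "i < k + r" "i \<notin> A2s" using that unfolding R_def A_def by auto
    moreover have "\<not> P1 D2 r b (i - k)" using calculation memA2s that(2) by auto
    moreover have "k + r < i + b" using calculation int2[of k i b r D1 D2] that(2) by (cases "i + b \<le> k + r") auto
    ultimately show ?thesis using that unfolding E2_def by auto
  qed
  have "R \<subseteq> E1 \<or> R \<subseteq> E2"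
  proof (rule ccontr)
    assume "\<not> (R \<subseteq> E1 \<or> R \<subseteq> E2)"
    then obtain i i' where ii: "i \<in> R" "i \<notin> E1" "i' \<in> R" "i' \<notin> E2" by blast
    have "\<not> i < k" using R1 ii by blast
    have "i' < k" using R2 ii by blast
    show False using upper_contra[OF assms(1,2), of i' b D1 D2 i] R1[OF ii(3) \<open>i' < k\<close>] R2[OF ii(1) \<open>\<not> i < k\<close>]
      unfolding E1_def E2_def by auto
  qed
  then have cR: "card R \<le> b - 1" using cE1 cE2 finE card_mono by (metis le_trans)
  have "A \<subseteq> (A1 \<union> A2s) \<union> R" unfolding R_def by auto
  then have "card A \<le> card ((A1 \<union> A2s) \<union> R)" using fin unfolding R_def by (intro card_mono) auto
  also have "\<dots> \<le> card (A1 \<union> A2s) + card R" by (rule card_Un_le)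
  finally have up: "card A \<le> card A1 + card A2 + (b - 1)" using cU cR by linarith
  define R' where "R' = (A1 \<union> A2s) - A"
  have S1: "i \<in> E1 \<and> P1 D1 k b i \<and> \<not> Pc k r D1 D2 b i" if "i \<in> R'" "i < k" for i
  proof -
    have "\<not> Pc k r D1 D2 b i" "P1 D1 k b i" using that unfolding R'_def A_def A1_def A2s_def by auto
    moreover have "k < i + b" using calculation int1[of i b k r D1 D2] by (cases "i + b \<le> k") auto
    ultimately show ?thesis using that unfolding E1_def by auto
  qed
  have S2: "i \<in> E2 \<and> P1 D2 r b (i - k) \<and> \<not> Pc k r D1 D2 b i \<and> k \<le> i \<and> i < k + r" if "i \<in> R'" "\<not> i < k" for i
  proof -
    have "i \<in> A2s" "i \<notin> A" using that unfolding R'_def A1_def by auto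
    then obtain j where j: "j < r" "P1 D2 r b j" "i = j + k" unfolding A2s_def A2_def by auto
    then have "\<not> Pc k r D1 D2 b i" "P1 D2 r b (i - k)" "i < k + r" "k \<le> i" using \<open>i \<notin> A\<close> unfolding A_def by auto
    moreover have "k + r < i + b" using calculation int2[of k i b r D1 D2] by (cases "i + b \<le> k + r") auto
    ultimately show ?thesis using that unfolding E2_def by auto
  qed
  have "R' \<subseteq> E1 \<or> R' \<subseteq> E2"
  proof (rule ccontr)
    assume "\<not> (R' \<subseteq> E1 \<or> R' \<subseteq> E2)"
    then obtain i i' where ii: "i \<in> R'" "i \<notin> E1" "i' \<in> R'" "i' \<notin> E2" by blast
    have "\<not> i < k" using S1 ii by blast
    have "i' < k" using S2 ii by blast
    show False using lower_contra[OF assms(1,2), of i' b D1 D2 i] S1[OF ii(3) \<open>i' < k\<close>] S2[OF ii(1) \<open>\<not> i < k\<close>]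
      unfolding E1_def E2_def by auto
  qed
  then have cR': "card R' \<le> b - 1" using cE1 cE2 finE card_mono by (metis le_trans)
  have "A1 \<union> A2s \<subseteq> A \<union> R'" unfolding R'_def by auto
  then have "card (A1 \<union> A2s) \<le> card (A \<union> R')" using fin unfolding R'_def by (intro card_mono) auto
  also have "\<dots> \<le> card A + card R'" by (rule card_Un_le)
  finally have lo: "card A1 + card A2 \<le> card A + (b - 1)" using cU cR' by linarith
  show ?thesis using up lo by simp
qed

lemma bd:
  assumes "length z = length w"
  shows "b_dist b z w = card {i. i < length z \<and> (\<exists>t<b. z ! ((i+t) mod length z) \<noteq> w ! ((i+t) mod length z))}"
proof -
  have "{i. i < length (b_read b z) \<and> b_read b z ! i \<noteq> b_read b w ! i}
      = {i. i < length z \<and> (\<exists>t<b. z ! ((i+t) mod length z) \<noteq> w ! ((i+t) mod length z))}"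
    using assms by (auto simp: b_read_def map_eq_conv; blast)
  then show ?thesis unfolding b_dist_def hamming_def by simp
qed

theorem lemma3p1:
  fixes x1 y1 x2 y2 :: "'a::{field,finite} list" and b k r :: nat
  assumes "0 < b" "0 < k" "0 < r"
    and "length x1 = k" "length y1 = k" "length x2 = r" "length y2 = r"
  shows "int (b_dist b x1 y1) + int (b_dist b x2 y2) - (int b - 1)
           \<le> int (b_dist b (x1 @ x2) (y1 @ y2))
       \<and> int (b_dist b (x1 @ x2) (y1 @ y2))
           \<le> int (b_dist b x1 y1) + int (b_dist b x2 y2) + (int b - 1)"
proof -
  define D1 where "D1 = (\<lambda>p. x1 ! p \<noteq> y1 ! p)"
  define D2 where "D2 = (\<lambda>p. x2 ! p \<noteq> y2 ! p)"
  have e1: "b_dist b x1 y1 = card {i. i < k \<and> P1 D1 k b i}"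
    using assms by (simp add: bd P1_def D1_def)
  have e2: "b_dist b x2 y2 = card {i. i < r \<and> P1 D2 r b i}"
    using assms by (simp add: bd P1_def D2_def)
  have "{i. i < length (x1 @ x2) \<and> (\<exists>t<b. (x1 @ x2) ! ((i+t) mod length (x1 @ x2)) \<noteq> (y1 @ y2) ! ((i+t) mod length (x1 @ x2)))}
      = {i. i < k + r \<and> Pc k r D1 D2 b i}"
  proof -
    have pw: "((x1 @ x2) ! p \<noteq> (y1 @ y2) ! p) = (if p < k then D1 p else D2 (p - k))" for p
      using assms(4-7) unfolding D1_def D2_def by (simp add: nth_append)
    have "length (x1 @ x2) = k + r" using assms by simp
    then show ?thesis unfolding Pc_def pw by simp
  qed
  then have e3: "b_dist b (x1 @ x2) (y1 @ y2) = card {i. i < k + r \<and> Pc k r D1 D2 b i}"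
    using assms by (simp add: bd)
  have "b_dist b (x1 @ x2) (y1 @ y2) \<le> b_dist b x1 y1 + b_dist b x2 y2 + (b - 1)
      \<and> b_dist b x1 y1 + b_dist b x2 y2 + 0 \<le> b_dist b (x1 @ x2) (y1 @ y2) + (b - 1)"
    unfolding e1 e2 e3 by (rule main_card) (use assms in auto)
  then show ?thesis using assms(1) by linarith
qed

end
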